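(* Let $N\ge1$, let real channel gains $a_{s,r},a_{s,j},a_{r,j}$ ($j=1,\dots,N$) be fixed, and for powers $\mathbf{P}=(P_s,P_r)\in[0,\infty)^2$ set $\mathsf{SNR}_{s,r}=a_{s,r}^2P_s$, $\mathsf{SNR}_{s,j}=a_{s,j}^2P_s$, $\mathsf{SNR}_{r,j}=a_{r,j}^2P_r$, and $\mathbf{S}(\mathbf{P})=(\mathsf{SNR}_{s,r},\mathsf{SNR}_{s,1},\dots,\mathsf{SNR}_{s,N},\mathsf{SNR}_{r,1},\dots,\mathsf{SNR}_{r,N})$. With $\mathsf{C}(x)=\tfrac12\log(1+x)$, $f_j(\rho,\mathbf{S})=\mathsf{SNR}_{s,j}+\mathsf{SNR}_{r,j}+2\rho\sqrt{\mathsf{SNR}_{s,j}\mathsf{SNR}_{r,j}}$, $g_j(\rho,\mathbf{S})=(1-\rho^2)(\mathsf{SNR}_{s,j}+\mathsf{SNR}_{s,r})$ and $R_{CS}(\rho,\mathbf{S})=\min_{1\le j\le N}\min(\mathsf{C}(f_j(\rho,\mathbf{S})),\mathsf{C}(g_j(\rho,\mathbf{S})))$, the map $(t,\mathbf{P})\mapsto R_{CS}(\sqrt t,\mathbf{S}(\mathbf{P}))$ is quasi-concave on $[0,1]\times[0,\infty)^2$ (i.e., $R_{CS}(\rho,\mathbf{S}(\mathbf{P}))$ is quasi-concave in $(\rho^2,\mathbf{P})$).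
   Context: Setting: real AWGN multicast relay channel with source $s$, relay $r$ and destinations $1,\dots,N$; $\rho\in[0,1]$ is the source–relay input correlation coefficient. A function $F$ on a convex set is quasi-concave if $F(\lambda x_1+(1-\lambda)x_2)\ge\min(F(x_1),F(x_2))$ for all $x_1,x_2$ and $\lambda\in[0,1]$. *)

theory Defs
  imports "HOL-Analysis.Analysis"
begin

definition quasi_concave_on :: "'a::real_vector set \<Rightarrow> ('a \<Rightarrow> real) \<Rightarrow> bool" where
  "quasi_concave_on S F \<longleftrightarrow>
     (\<forall>x1\<in>S. \<forall>x2\<in>S. \<forall>u::real. 0 \<le> u \<and> u \<le> 1 \<longrightarrow>
        F (u *\<^sub>R x1 + (1 - u) *\<^sub>R x2) \<ge> min (F x1) (F x2))"

definition Cap :: "real \<Rightarrow> real" where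
  "Cap x = (1/2) * log 2 (1 + x)"

definition f_j :: "real \<Rightarrow> real \<Rightarrow> real \<Rightarrow> real" where
  "f_j \<rho> snr_sj snr_rj = snr_sj + snr_rj + 2 * \<rho> * sqrt (snr_sj * snr_rj)"

definition g_j :: "real \<Rightarrow> real \<Rightarrow> real \<Rightarrow> real" where
  "g_j \<rho> snr_sj snr_sr = (1 - \<rho>^2) * (snr_sj + snr_sr)"

definition R_CS :: "nat \<Rightarrow> real \<Rightarrow> real \<times> (nat \<Rightarrow> real) \<times> (nat \<Rightarrow> real) \<Rightarrow> real" where
  "R_CS N \<rho> S = (case S of (snr_sr, snr_s, snr_r) \<Rightarrow>
     Min ((\<lambda>j. min (Cap (f_j \<rho> (snr_s j) (snr_r j))) (Cap (g_j \<rho> (snr_s j) snr_sr))) ` {1..N}))"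

definition SNR_vec :: "real \<Rightarrow> (nat \<Rightarrow> real) \<Rightarrow> (nat \<Rightarrow> real) \<Rightarrow> real \<Rightarrow> real
    \<Rightarrow> real \<times> (nat \<Rightarrow> real) \<times> (nat \<Rightarrow> real)" where
  "SNR_vec a_sr a_s a_r Ps Pr = (a_sr^2 * Ps, (\<lambda>j. (a_s j)^2 * Ps), (\<lambda>j. (a_r j)^2 * Pr))"

end

theory Submission imports Defs begin

lemma key:
  fixes w1 w2 a1 a2 b1 b2 :: real
  assumes "0\<le>w1" "0\<le>w2" "0\<le>a1" "0\<le>a2" "0\<le>b1" "0\<le>b2"
    and le: "a2^2+b2^2+2*w2*(a2*b2) \<le> a1^2+b1^2+2*w1*(a1*b1)"
  shows "0 \<le> (a1^2+b1^2+2*w1*(a1*b1)) - (a2^2+b2^2+2*w2*(a2*b2))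
           + 2*(\<bar>w1-w2\<bar>*\<bar>a1*b2-a2*b1\<bar> - (w1-w2)*(a1*b1-a2*b2))"
proof (cases "w2 \<le> w1")
  case True
  show ?thesis
  proof (cases "a1*b1 \<le> a2*b2 + \<bar>a1*b2-a2*b1\<bar>")
    case True
    have "0 \<le> (w1-w2)*(a2*b2 + \<bar>a1*b2-a2*b1\<bar> - a1*b1)"
      using True \<open>w2\<le>w1\<close> by simp
    then show ?thesis using le \<open>w2\<le>w1\<close> by (simp add: algebra_simps)
  next
    case False
    have d1: "(a1+a2)*(b1-b2) > 0"
    proof -
      have "(a1+a2)*(b1-b2) = (a1*b1 - a2*b2) - (a1*b2-a2*b1)" by (simp add: algebra_simps)
      moreover have "a1*b2-a2*b1 \<le> \<bar>a1*b2-a2*b1\<bar>" by simp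
      ultimately show ?thesis using False by linarith
    qed
    have d2: "(b1+b2)*(a1-a2) > 0"
    proof -
      have "(b1+b2)*(a1-a2) = (a1*b1 - a2*b2) + (a1*b2-a2*b1)" by (simp add: algebra_simps)
      moreover have "-(a1*b2-a2*b1) \<le> \<bar>a1*b2-a2*b1\<bar>" by simp
      ultimately show ?thesis using False by linarith
    qed
    have "b2 \<le> b1" using d1 assms(3,4) by (smt (verit) mult_nonneg_nonpos)
    have "a2 \<le> a1" using d2 assms(5,6) by (smt (verit) mult_nonneg_nonpos)
    have A: "a2^2 \<le> a1^2" using \<open>a2\<le>a1\<close> assms by (simp add: power_mono)
    have B: "b2^2 \<le> b1^2" using \<open>b2\<le>b1\<close> assms by (simp add: power_mono)
    have G: "a2*b2 \<le> a1*b1" using \<open>a2\<le>a1\<close> \<open>b2\<le>b1\<close> assms by (simp add: mult_mono)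
    have e: "(a1^2+b1^2+2*w1*(a1*b1)) - (a2^2+b2^2+2*w2*(a2*b2))
           + 2*(\<bar>w1-w2\<bar>*\<bar>a1*b2-a2*b1\<bar> - (w1-w2)*(a1*b1-a2*b2))
        = (a1^2-a2^2) + (b1^2-b2^2) + 2*w2*(a1*b1-a2*b2) + 2*(w1-w2)*(\<bar>a1*b2-a2*b1\<bar> + a2*b2)"
      using \<open>w2\<le>w1\<close> by (simp add: algebra_simps)
    have "0 \<le> w2*(a1*b1-a2*b2)" using G assms by simp
    moreover have "0 \<le> (w1-w2)*(\<bar>a1*b2-a2*b1\<bar> + a2*b2)" using \<open>w2\<le>w1\<close> assms by simp
    ultimately show ?thesis using e A B by linarith
  qed
next
  case False
  show ?thesis
  proof (cases "a2*b2 \<le> a1*b1 + \<bar>a1*b2-a2*b1\<bar>")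
    case True
    have "0 \<le> (w2-w1)*(a1*b1 + \<bar>a1*b2-a2*b1\<bar> - a2*b2)"
      using True False by simp
    then show ?thesis using le False by (simp add: algebra_simps)
  next
    case F2: False
    have d1: "(a1+a2)*(b2-b1) > 0"
    proof -
      have "(a1+a2)*(b2-b1) = (a2*b2 - a1*b1) + (a1*b2-a2*b1)" by (simp add: algebra_simps)
      moreover have "-(a1*b2-a2*b1) \<le> \<bar>a1*b2-a2*b1\<bar>" by simp
      ultimately show ?thesis using F2 by linarith
    qed
    have d2: "(b1+b2)*(a2-a1) > 0"
    proof -
      have "(b1+b2)*(a2-a1) = (a2*b2 - a1*b1) - (a1*b2-a2*b1)" by (simp add: algebra_simps)
      moreover have "(a1*b2-a2*b1) \<le> \<bar>a1*b2-a2*b1\<bar>" by simp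
      ultimately show ?thesis using F2 by linarith
    qed
    have "b1 \<le> b2" using d1 assms(3,4) by (smt (verit) mult_nonneg_nonpos)
    have "a1 \<le> a2" using d2 assms(5,6) by (smt (verit) mult_nonneg_nonpos)
    have A: "a1^2 \<le> a2^2" using \<open>a1\<le>a2\<close> assms by (simp add: power_mono)
    have B: "b1^2 \<le> b2^2" using \<open>b1\<le>b2\<close> assms by (simp add: power_mono)
    have G: "a1*b1 < a2*b2" using F2 by (smt (verit) abs_ge_zero)
    have "w1 < w2" using False by simp
    have "0 < w2*(a2*b2-a1*b1)" using G \<open>w1<w2\<close> assms by simp
    moreover have "0 \<le> (w2-w1)*(a1*b1)" using \<open>w1<w2\<close> assms by simp
    ultimately have "a1^2+b1^2+2*w1*(a1*b1) < a2^2+b2^2+2*w2*(a2*b2)"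
      using A B by (simp add: algebra_simps)
    then show ?thesis using le by simp
  qed
qed

lemma core:
  fixes w1 w2 a1 a2 b1 b2 u :: real
  assumes nn: "0\<le>w1" "0\<le>w2" "0\<le>a1" "0\<le>a2" "0\<le>b1" "0\<le>b2" and u: "0\<le>u" "u\<le>1"
  shows "min (a1^2+b1^2+2 * w1 * (a1 * b1)) (a2^2+b2^2+2 * w2 * (a2 * b2)) \<le>
     (u * a1^2+(1-u) * a2^2) + (u * b1^2+(1-u) * b2^2)
       + 2 *  sqrt(u * w1^2+(1-u) * w2^2) *  sqrt((u * a1^2+(1-u) * a2^2) * (u * b1^2+(1-u) * b2^2))"
proof -
  define v where "v = 1 - u"
  have v: "0 \<le> v" using u v_def by simp
  define S where "S = u * w1+v * w2"
  define \<Gamma> where "\<Gamma> = u * (a1 * b1)+v * (a2 * b2)"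
  define \<Delta> where "\<Delta> = w1 - w2"
  define D where "D = a1 * b2-a2 * b1"
  define h1 where "h1 = a1^2+b1^2+2 * w1 * (a1 * b1)"
  define h2 where "h2 = a2^2+b2^2+2 * w2 * (a2 * b2)"
  define E where "E = \<bar>\<Delta>\<bar> * \<bar>D\<bar> - \<Delta> * (a1 * b1-a2 * b2)"
  have S0: "0 \<le> S" using nn u v by (simp add: S_def)
  have G0: "0 \<le> \<Gamma>" using nn u v by (simp add: \<Gamma>_def)
  have P: "u * w1^2+(1-u) * w2^2 = S^2 + u * v * \<bar>\<Delta>\<bar>^2"
    by (simp add: S_def \<Delta>_def v_def power2_eq_square algebra_simps)
  have Q: "(u * a1^2+(1-u) * a2^2) * (u * b1^2+(1-u) * b2^2) = \<Gamma>^2 + u * v * \<bar>D\<bar>^2"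
    by (simp add: \<Gamma>_def D_def v_def power2_eq_square algebra_simps)
  have CS: "S * \<Gamma> + u * v * (\<bar>\<Delta>\<bar> * \<bar>D\<bar>) \<le> sqrt(S^2 + u * v * \<bar>\<Delta>\<bar>^2)  *  sqrt(\<Gamma>^2 + u * v * \<bar>D\<bar>^2)"
  proof -
    have "(S^2 + u * v * \<bar>\<Delta>\<bar>^2)  *  (\<Gamma>^2 + u * v * \<bar>D\<bar>^2) - (S * \<Gamma> + u * v * (\<bar>\<Delta>\<bar> * \<bar>D\<bar>))^2
          = u * v * (S * \<bar>D\<bar> - \<Gamma> * \<bar>\<Delta>\<bar>)^2"
      by (simp add: power2_eq_square algebra_simps)
    moreover have "0 \<le> u * v * (S * \<bar>D\<bar> - \<Gamma> * \<bar>\<Delta>\<bar>)^2" using u v by simp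
    ultimately have "(S * \<Gamma> + u * v * (\<bar>\<Delta>\<bar> * \<bar>D\<bar>))^2 \<le> (S^2 + u * v * \<bar>\<Delta>\<bar>^2)  *  (\<Gamma>^2 + u * v * \<bar>D\<bar>^2)"
      by linarith
    then show ?thesis by (simp add: real_le_rsqrt real_sqrt_mult[symmetric])
  qed
  have SG: "S * \<Gamma> = u * w1 * (a1 * b1) + v * w2 * (a2 * b2) - u * v * \<Delta> * (a1 * b1-a2 * b2)"
    by (simp add: S_def \<Gamma>_def \<Delta>_def v_def algebra_simps)
  have lb: "u * h1 + v * h2 + 2 * u * v * E \<le> (u * a1^2+(1-u) * a2^2) + (u * b1^2+(1-u) * b2^2)
       + 2 *  sqrt(u * w1^2+(1-u) * w2^2) *  sqrt((u * a1^2+(1-u) * a2^2) * (u * b1^2+(1-u) * b2^2))"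
  proof -
    have "u * h1 + v * h2 + 2 * u * v * E = (u * a1^2+(1-u) * a2^2) + (u * b1^2+(1-u) * b2^2)
        + 2 * (S * \<Gamma> + u * v * (\<bar>\<Delta>\<bar> * \<bar>D\<bar>))"
      unfolding SG by (simp add: h1_def h2_def E_def v_def algebra_simps)
    then show ?thesis using CS P Q by simp
  qed
  have Esym: "E = \<bar>w2-w1\<bar> * \<bar>a2 * b1-a1 * b2\<bar> - (w2-w1) * (a2 * b2-a1 * b1)"
    by (simp add: E_def \<Delta>_def D_def abs_minus_commute algebra_simps)
  have "min h1 h2 \<le> u * h1 + v * h2 + 2 * u * v * E"
  proof (cases "h2 \<le> h1")
    case True
    have k: "0 \<le> h1 - h2 + 2 * E" using key[OF nn True[unfolded h1_def h2_def]]
      by (simp add: h1_def h2_def E_def \<Delta>_def D_def)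
    have "0 \<le> (1-v) * (h1-h2) + v * (h1-h2+2 * E)"
      using k True v u v_def by simp
    then have "0 \<le> u * ((1-v) * (h1-h2) + v * (h1-h2+2 * E))" using u by simp
    then have "h2 \<le> u * h1 + v * h2 + 2 * u * v * E" by (simp add: v_def algebra_simps)
    then show ?thesis by simp
  next
    case False
    have le: "h1 \<le> h2" using False by simp
    have k: "0 \<le> h2 - h1 + 2 * E"
      using key[OF nn(2,1,4,3,6,5) le[unfolded h1_def h2_def]]
      by (simp add: h1_def h2_def Esym algebra_simps)
    have "0 \<le> (1-u) * (h2-h1) + u * (h2-h1+2 * E)"
      using k le u by simp
    then have "0 \<le> v * ((1-u) * (h2-h1) + u * (h2-h1+2 * E))" using v by simp
    then have "h1 \<le> u * h1 + v * h2 + 2 * u * v * E" by (simp add: v_def algebra_simps)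
    then show ?thesis by simp
  qed
  then show ?thesis using lb by (simp add: h1_def h2_def)
qed

lemma f_qc:
  fixes t1 t2 x1 x2 y1 y2 u :: real
  assumes "0\<le>t1" "0\<le>t2" "0\<le>x1" "0\<le>x2" "0\<le>y1" "0\<le>y2" "0\<le>u" "u\<le>1"
  shows "min (f_j (sqrt t1) x1 y1) (f_j (sqrt t2) x2 y2)
     \<le> f_j (sqrt (u * t1 + (1-u) * t2)) (u * x1 + (1-u) * x2) (u * y1 + (1-u) * y2)"
  using core[of "sqrt t1" "sqrt t2" "sqrt x1" "sqrt x2" "sqrt y1" "sqrt y2" u] assms
  by (simp add: f_j_def real_sqrt_mult)

lemma g_qc:
  fixes t1 t2 P1 P2 K u :: real
  assumes "t1\<le>1" "t2\<le>1" "0\<le>P1" "0\<le>P2" "0\<le>K" "0\<le>u" "u\<le>1"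
  shows "min ((1-t1)  *  (K  *  P1)) ((1-t2)  *  (K  *  P2))
     \<le> (1 - (u  *  t1 + (1-u)  *  t2))  *  (K  *  (u  *  P1 + (1-u)  *  P2))"
proof -
  define v where "v = 1 - u"
  have v: "0 \<le> v" using assms v_def by simp
  define a1 where "a1 = 1 - t1"
  define a2 where "a2 = 1 - t2"
  define b1 where "b1 = K  *  P1"
  define b2 where "b2 = K  *  P2"
  define m where "m = min (a1  *  b1) (a2  *  b2)"
  have nn: "0 \<le> a1" "0 \<le> a2" "0 \<le> b1" "0 \<le> b2" using assms by (auto simp: a1_def a2_def b1_def b2_def)
  have m0: "0 \<le> m" using nn by (simp add: m_def)
  have "m  *  m \<le> (a1  *  b1)  *  (a2  *  b2)" unfolding m_def using nn
    by (simp add: mult_mono min_def)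
  moreover have "4  *  ((a1  *  b2)  *  (a2  *  b1)) \<le> (a1  *  b2 + a2  *  b1)^2"
  proof -
    have "(a1  *  b2 + a2  *  b1)^2 - 4  *  ((a1  *  b2)  *  (a2  *  b1)) = (a1  *  b2 - a2  *  b1)^2"
      by (simp add: power2_eq_square algebra_simps)
    then show ?thesis by (smt (verit) zero_le_power2)
  qed
  ultimately have "(2  *  m)^2 \<le> (a1  *  b2 + a2  *  b1)^2"
    by (simp add: power2_eq_square algebra_simps)
  then have s: "2  *  m \<le> a1  *  b2 + a2  *  b1"
    using power2_le_imp_le[OF \<open>(2  *  m)^2 \<le> (a1  *  b2 + a2  *  b1)^2\<close>] nn by simp
  have "(1 - (u  *  t1 + (1-u)  *  t2))  *  (K  *  (u  *  P1 + (1-u)  *  P2))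
      = u * u * (a1 * b1) + v * v * (a2 * b2) + u * v * (a1  *  b2 + a2  *  b1)"
    by (simp add: a1_def a2_def b1_def b2_def v_def algebra_simps)
  moreover have "u * u * m \<le> u * u * (a1 * b1)" "v * v * m \<le> v * v * (a2 * b2)" "u * v * (2 * m) \<le> u * v * (a1  *  b2 + a2  *  b1)"
    using assms v s by (auto simp: m_def intro!: mult_left_mono)
  moreover have "m = u * u * m + v * v * m + u * v * (2 * m)"
  proof -
    have "u * u + v * v + u * v * 2 = (u+v)^2" by (simp add: power2_eq_square algebra_simps)
    then have "u * u + v * v + u * v * 2 = 1" by (simp add: v_def)
    then show ?thesis by (metis (no_types, lifting) distrib_right mult.commute mult.left_commute mult_1)
  qed
  ultimately show ?thesis unfolding m_def a1_def a2_def b1_def b2_def by linarith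
qed

lemma Cap_mono: "0 \<le> x \<Longrightarrow> x \<le> y \<Longrightarrow> Cap x \<le> Cap y"
  by (simp add: Cap_def)

lemma f_nonneg: "0 \<le> r \<Longrightarrow> 0 \<le> x \<Longrightarrow> 0 \<le> y \<Longrightarrow> 0 \<le> f_j r x y"
  by (simp add: f_j_def)

lemma min_Cap:
  assumes "0 \<le> a" "0 \<le> b" "min a b \<le> c"
  shows "min (Cap a) (Cap b) \<le> Cap c"
  using assms Cap_mono by (metis min.absorb1 min.absorb2 min_le_iff_disj nle_le order_trans)

theorem corollary1:
  fixes N :: nat and a_sr :: real and a_s a_r :: "nat \<Rightarrow> real"
  assumes "N \<ge> 1"
  shows "quasi_concave_on ({0..1} \<times> {0..} \<times> {0..})
           (\<lambda>(t, Ps, Pr). R_CS N (sqrt t) (SNR_vec a_sr a_s a_r Ps Pr))"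
  unfolding quasi_concave_on_def
proof (intro ballI allI impI)
  fix X1 X2 :: "real \<times> real \<times> real" and u :: real
  assume X1: "X1 \<in> {0..1} \<times> {0..} \<times> {0..}" and X2: "X2 \<in> {0..1} \<times> {0..} \<times> {0..}"
    and u: "0 \<le> u \<and> u \<le> 1"
  obtain t1 p1 q1 where e1: "X1 = (t1, p1, q1)" by (cases X1) auto
  obtain t2 p2 q2 where e2: "X2 = (t2, p2, q2)" by (cases X2) auto
  have b: "0 \<le> t1" "t1 \<le> 1" "0 \<le> p1" "0 \<le> q1" "0 \<le> t2" "t2 \<le> 1" "0 \<le> p2" "0 \<le> q2"
    using X1 X2 e1 e2 by auto
  define tm where "tm = u * t1 + (1-u) * t2"
  define pm where "pm = u * p1 + (1-u) * p2"
  define qm where "qm = u * q1 + (1-u) * q2"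
  have cm: "u *\<^sub>R X1 + (1 - u) *\<^sub>R X2 = (tm, pm, qm)"
    by (simp add: e1 e2 tm_def pm_def qm_def)
  define F where "F = (\<lambda>t p q j. min (Cap (f_j (sqrt t) ((a_s j)\<^sup>2 * p) ((a_r j)\<^sup>2 * q)))
                                 (Cap (g_j (sqrt t) ((a_s j)\<^sup>2 * p) (a_sr\<^sup>2 * p))))"
  have R: "\<And>t p q. R_CS N (sqrt t) (SNR_vec a_sr a_s a_r p q) = Min (F t p q ` {1..N})"
    by (simp add: R_CS_def SNR_vec_def F_def)
  have fin: "finite {1..N}" "{1..N} \<noteq> {}" using assms by auto
  have pt: "min (F t1 p1 q1 j) (F t2 p2 q2 j) \<le> F tm pm qm j" for j
  proof -
    have fq: "min (f_j (sqrt t1) ((a_s j)\<^sup>2 * p1) ((a_r j)\<^sup>2 * q1)) (f_j (sqrt t2) ((a_s j)\<^sup>2 * p2) ((a_r j)\<^sup>2 * q2))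
       \<le> f_j (sqrt tm) ((a_s j)\<^sup>2 * pm) ((a_r j)\<^sup>2 * qm)"
    proof -
      have "(a_s j)\<^sup>2 * pm = u * ((a_s j)\<^sup>2 * p1) + (1-u) * ((a_s j)\<^sup>2 * p2)"
           "(a_r j)\<^sup>2 * qm = u * ((a_r j)\<^sup>2 * q1) + (1-u) * ((a_r j)\<^sup>2 * q2)"
        by (simp_all add: pm_def qm_def algebra_simps)
      then show ?thesis unfolding tm_def using f_qc[of t1 t2 "(a_s j)\<^sup>2 * p1" "(a_s j)\<^sup>2 * p2"
          "(a_r j)\<^sup>2 * q1" "(a_r j)\<^sup>2 * q2" u] b u by simp
    qed
    have gq: "min (g_j (sqrt t1) ((a_s j)\<^sup>2 * p1) (a_sr\<^sup>2 * p1)) (g_j (sqrt t2) ((a_s j)\<^sup>2 * p2) (a_sr\<^sup>2 * p2))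
       \<le> g_j (sqrt tm) ((a_s j)\<^sup>2 * pm) (a_sr\<^sup>2 * pm)"
    proof -
      have tm01: "0 \<le> tm" using b u by (simp add: tm_def)
      have g: "\<And>t p. 0 \<le> t \<Longrightarrow> g_j (sqrt t) ((a_s j)\<^sup>2 * p) (a_sr\<^sup>2 * p) = (1 - t) * (((a_s j)\<^sup>2 + a_sr\<^sup>2) * p)"
        by (simp add: g_j_def algebra_simps)
      show ?thesis unfolding g[OF b(1)] g[OF b(5)] g[OF tm01] unfolding tm_def pm_def
        using g_qc[of t1 t2 p1 p2 "(a_s j)\<^sup>2 + a_sr\<^sup>2" u] b u by simp
    qed
    have f0: "0 \<le> f_j (sqrt t) ((a_s j)\<^sup>2 * p) ((a_r j)\<^sup>2 * q)" if "0 \<le> t" "0 \<le> p" "0 \<le> q" for t p q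
      using that by (intro f_nonneg) auto
    have g0: "0 \<le> g_j (sqrt t) ((a_s j)\<^sup>2 * p) (a_sr\<^sup>2 * p)" if "0 \<le> t" "t \<le> 1" "0 \<le> p" for t p
      using that by (simp add: g_j_def)
    have A: "min (Cap (f_j (sqrt t1) ((a_s j)\<^sup>2 * p1) ((a_r j)\<^sup>2 * q1))) (Cap (f_j (sqrt t2) ((a_s j)\<^sup>2 * p2) ((a_r j)\<^sup>2 * q2)))
       \<le> Cap (f_j (sqrt tm) ((a_s j)\<^sup>2 * pm) ((a_r j)\<^sup>2 * qm))"
      by (rule min_Cap[OF f0 f0 fq]) (use b u in \<open>auto simp: tm_def pm_def qm_def\<close>)
    have B: "min (Cap (g_j (sqrt t1) ((a_s j)\<^sup>2 * p1) (a_sr\<^sup>2 * p1))) (Cap (g_j (sqrt t2) ((a_s j)\<^sup>2 * p2) (a_sr\<^sup>2 * p2)))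
       \<le> Cap (g_j (sqrt tm) ((a_s j)\<^sup>2 * pm) (a_sr\<^sup>2 * pm))"
      by (rule min_Cap[OF g0 g0 gq]) (use b u in \<open>auto simp: tm_def pm_def qm_def\<close>)
    show ?thesis using A B unfolding F_def by linarith
  qed
  have "min (Min (F t1 p1 q1 ` {1..N})) (Min (F t2 p2 q2 ` {1..N})) \<le> Min (F tm pm qm ` {1..N})"
  proof -
    have "\<forall>j\<in>{1..N}. min (Min (F t1 p1 q1 ` {1..N})) (Min (F t2 p2 q2 ` {1..N})) \<le> F tm pm qm j"
    proof
      fix j assume j: "j \<in> {1..N}"
      have "Min (F t1 p1 q1 ` {1..N}) \<le> F t1 p1 q1 j" "Min (F t2 p2 q2 ` {1..N}) \<le> F t2 p2 q2 j"
        using fin j by auto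
      then show "min (Min (F t1 p1 q1 ` {1..N})) (Min (F t2 p2 q2 ` {1..N})) \<le> F tm pm qm j"
        using pt[of j] by linarith
    qed
    then show ?thesis using fin by (simp add: Min_ge_iff)
  qed
  then show "min ((\<lambda>(t, Ps, Pr). R_CS N (sqrt t) (SNR_vec a_sr a_s a_r Ps Pr)) X1)
        ((\<lambda>(t, Ps, Pr). R_CS N (sqrt t) (SNR_vec a_sr a_s a_r Ps Pr)) X2)
    \<le> (\<lambda>(t, Ps, Pr). R_CS N (sqrt t) (SNR_vec a_sr a_s a_r Ps Pr)) (u *\<^sub>R X1 + (1 - u) *\<^sub>R X2)"
    unfolding cm unfolding e1 e2 by (simp only: R prod.case)
qed

end
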